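(* Consider the replace-after-fixed-time process with parameters $\lambda>0$, $r>0$, and its counts $A(t)$, $D(t)$ as defined in the context. Let $j\in\{0,1,2,\ldots\}$ and $t$ with $jr\le t<(j+1)r$. Then for $k=0,1,\ldots,j$ and $l=0,1,2,\ldots$, \[ \Pr(A(t)=k,\ D(t)=l)=e^{-\lambda t}\binom{k+l}{k}\sum_{i=0}^{j-k}(-1)^i\binom{l+1}{i}\frac{(\lambda(t-(i+k)r))^l}{l!}. \]
   Context: Let $X_1,X_2,\ldots$ be independent random variables, each exponentially distributed with rate $\lambda>0$ (density $\lambda e^{-\lambda x}$ for $x>0$). Fix $r>0$ and set $Y_k=\min(X_k,r)$. For $t\ge 0$ let $N(t)=\max\{n\ge 0:\sum_{k=1}^n Y_k\le t\}$ (the replace-after-fixed-time, or RaFT, process). Write $N(t)=A(t)+D(t)$, where $A(t)=\#\{k\le N(t): X_k>r\}$ (components replaced while still functioning) and $D(t)=\#\{k\le N(t): X_k\le r\}$ (components replaced because they failed). Binomial coefficients $\binom{a}{b}$ with $b>a$ are $0$. *)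

theory Defs
  imports "HOL-Probability.Probability"
begin

text \<open>Replace-after-fixed-time process. Lifetimes are indexed from 0:
  X 0, X 1, ... correspond to the paper's X_1, X_2, ...; Y_k = min (X k) r.\<close>

definition RaFT_N :: "(nat \<Rightarrow> 'a \<Rightarrow> real) \<Rightarrow> real \<Rightarrow> real \<Rightarrow> 'a \<Rightarrow> nat" where
  "RaFT_N X r t \<omega> =
     (let S = {n. (\<Sum>k<n. min (X k \<omega>) r) \<le> t} in if finite S then Max S else 0)"

definition RaFT_A :: "(nat \<Rightarrow> 'a \<Rightarrow> real) \<Rightarrow> real \<Rightarrow> real \<Rightarrow> 'a \<Rightarrow> nat" where
  "RaFT_A X r t \<omega> = card {k. k < RaFT_N X r t \<omega> \<and> X k \<omega> > r}"

definition RaFT_D :: "(nat \<Rightarrow> 'a \<Rightarrow> real) \<Rightarrow> real \<Rightarrow> real \<Rightarrow> 'a \<Rightarrow> nat" where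
  "RaFT_D X r t \<omega> = card {k. k < RaFT_N X r t \<omega> \<and> X k \<omega> \<le> r}"

end

theory Submission
  imports Defs
begin


definition psi :: "nat \<Rightarrow> real \<Rightarrow> real" where
  "psi l y = (if 0 \<le> y then y ^ l / fact l else 0)"

lemma psi_nonneg: "0 \<le> psi l y" by (simp add: psi_def)

lemma psi_Suc: "psi (Suc l) y = (max y 0) ^ Suc l / fact (Suc l)"
  by (simp add: psi_def max_def)

lemma psi_cont: "continuous_on A (psi (Suc l))"
  unfolding psi_Suc[abs_def] by (intro continuous_intros) auto

lemma psi_deriv:
  assumes "y \<noteq> 0"
  shows "(psi (Suc l) has_real_derivative psi l y) (at y)"
proof (cases "y > 0")
  case True
  have d0: "((\<lambda>z. z ^ Suc l) has_real_derivative real (Suc l) * y ^ l) (at y)"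
    using DERIV_pow[of "Suc l" y] by simp
  have d: "((\<lambda>z. z ^ Suc l / fact (Suc l)) has_real_derivative (real (Suc l) * y ^ l / fact (Suc l))) (at y)"
    by (rule DERIV_cdivide[OF d0])
  have e: "real (Suc l) * y ^ l / fact (Suc l) = psi l y"
  proof -
    have "fact (Suc l) = (real (Suc l) * fact l :: real)" by (simp only: fact_Suc of_nat_mult) 
    then show ?thesis using True by (simp add: psi_def)
  qed
  show ?thesis
    apply (rule has_field_derivative_transform_within_open[OF d[unfolded e], of "{0<..}"])
    using True by (auto simp: psi_def)
next
  case False
  with assms have y: "y < 0" by auto
  have d: "((\<lambda>z. 0) has_real_derivative 0) (at y)" by simp
  show ?thesis
    apply (rule has_field_derivative_transform_within_open[of _ _ _ "{..<0}"])
    using y by (auto simp: psi_def)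
qed

lemma psi_integral:
  assumes r: "0 \<le> r"
  shows "((\<lambda>y. psi l (c - y)) has_integral (psi (Suc l) c - psi (Suc l) (c - r))) {0..r}"
proof -
  have "((\<lambda>y. psi l (c - y)) has_integral ((\<lambda>y. - psi (Suc l) (c - y)) r - (\<lambda>y. - psi (Suc l) (c - y)) 0)) {0..r}"
  proof (rule fundamental_theorem_of_calculus_interior_strong[where S="{c}"])
    show "finite {c}" by simp
    show "0 \<le> r" by fact
    fix x assume x: "x \<in> {0<..<r} - {c}"
    have "((\<lambda>y. - psi (Suc l) (c - y)) has_real_derivative psi l (c - x)) (at x)"
      using psi_deriv[of "c - x" l] x
      by (auto intro!: derivative_eq_intros DERIV_chain2[where f="psi (Suc l)"])
    then show "((\<lambda>y. - psi (Suc l) (c - y)) has_vector_derivative psi l (c - x)) (at x)"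
      by (simp add: has_real_derivative_iff_has_vector_derivative)
  next
    show "continuous_on {0..r} (\<lambda>y. - psi (Suc l) (c - y))"
      by (intro continuous_intros continuous_on_compose2[OF psi_cont]) auto
  qed
  then show ?thesis by simp
qed

lemma alt_sum:
  fixes f :: "nat \<Rightarrow> real"
  shows "(\<Sum>i\<le>Suc l. (-1)^i * real (Suc l choose i) * f i)
       = (\<Sum>i\<le>l. (-1)^i * real (l choose i) * (f i - f (Suc i)))"
proof -
  have A: "(\<Sum>i\<le>Suc l. (-1)^i * real (Suc l choose i) * f i)
      = f 0 + (\<Sum>i\<le>l. (-1)^(Suc i) * real (l choose i) * f (Suc i))
            + (\<Sum>i\<le>l. (-1)^(Suc i) * real (l choose Suc i) * f (Suc i))"
    by (subst sum.atMost_Suc_shift) (simp add: sum.distrib algebra_simps sum_subtractf sum_negf)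
  have B: "(\<Sum>i\<le>l. (-1)^i * real (l choose i) * f i)
      = f 0 + (\<Sum>i\<le>l. (-1)^(Suc i) * real (l choose Suc i) * f (Suc i))"
  proof (cases l)
    case 0 then show ?thesis by simp
  next
    case (Suc m)
    show ?thesis unfolding Suc
      by (subst sum.atMost_Suc_shift) (simp add: sum.atMost_Suc binomial_eq_0)
  qed
  have C: "(\<Sum>i\<le>l. (-1)^i * real (l choose i) * (f i - f (Suc i)))
     = (\<Sum>i\<le>l. (-1)^i * real (l choose i) * f i) - (\<Sum>i\<le>l. (-1)^i * real (l choose i) * f (Suc i))"
    by (simp add: right_diff_distrib sum_subtractf)
  have D: "(\<Sum>i\<le>l. (-1)^(Suc i) * real (l choose i) * f (Suc i)) = - (\<Sum>i\<le>l. (-1)^i * real (l choose i) * f (Suc i))"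
    by (simp add: sum_negf[symmetric])
  show ?thesis
    unfolding A C B D by simp
qed

definition Phi :: "real \<Rightarrow> nat \<Rightarrow> real \<Rightarrow> real" where
  "Phi r l w = (\<Sum>i\<le>l. (-1)^i * real (l choose i) * psi l (w - real i * r))"

lemma Phi_integral:
  assumes r: "0 \<le> r"
  shows "((\<lambda>y. Phi r l (w - y)) has_integral Phi r (Suc l) w) {0..r}"
proof -
  have "((\<lambda>y. Phi r l (w - y)) has_integral
     (\<Sum>i\<le>l. (-1)^i * real (l choose i) * (psi (Suc l) (w - real i * r) - psi (Suc l) (w - real i * r - r)))) {0..r}"
    unfolding Phi_def
  proof (intro has_integral_sum, simp, intro has_integral_mult_right)
    fix i
    show "((\<lambda>y. psi l (w - y - real i * r)) has_integral
        psi (Suc l) (w - real i * r) - psi (Suc l) (w - real i * r - r)) {0..r}"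
      using psi_integral[OF r, of l "w - real i * r"] by (simp add: algebra_simps)
  qed
  also have "(\<Sum>i\<le>l. (-1)^i * real (l choose i) * (psi (Suc l) (w - real i * r) - psi (Suc l) (w - real i * r - r)))
      = Phi r (Suc l) w"
    unfolding Phi_def alt_sum[where f="\<lambda>i. psi (Suc l) (w - real i * r)"]
    by (simp add: algebra_simps)
  finally show ?thesis .
qed

lemma Phi_nonneg:
  assumes r: "0 \<le> r"
  shows "0 \<le> Phi r l w"
proof (induction l arbitrary: w)
  case 0 then show ?case by (simp add: Phi_def psi_nonneg)
next
  case (Suc l)
  show ?case
    by (rule has_integral_nonneg[OF Phi_integral[OF r]]) (use Suc in auto)
qed



definition Dexp :: "real \<Rightarrow> real measure" where
  "Dexp lam = density lborel (\<lambda>x. ennreal (exponential_density lam x))"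

definition cntv :: "real \<Rightarrow> nat \<Rightarrow> (nat \<Rightarrow> real) \<Rightarrow> real" where
  "cntv r n x = (\<Sum>i<n. if r < x i then 1 else 0)"

definition ssum :: "real \<Rightarrow> nat \<Rightarrow> (nat \<Rightarrow> real) \<Rightarrow> real" where
  "ssum r n x = (\<Sum>i<n. min (x i) r)"

definition PP :: "real \<Rightarrow> nat \<Rightarrow> (nat \<Rightarrow> real) measure" where
  "PP lam n = PiM {..<n} (\<lambda>_. Dexp lam)"

lemma sets_Dexp[measurable_cong]: "sets (Dexp lam) = sets borel"
  by (simp add: Dexp_def)

lemma space_Dexp[simp]: "space (Dexp lam) = UNIV"
  by (simp add: Dexp_def)

lemma prob_space_Dexp: "0 < lam \<Longrightarrow> prob_space (Dexp lam)"
  unfolding Dexp_def by (rule prob_space_exponential_density)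

lemma meas_cntv[measurable]: "cntv r n \<in> borel_measurable (PiM {..<n} (\<lambda>_. Dexp lam))"
  unfolding cntv_def by (intro borel_measurable_sum) measurable

lemma meas_ssum[measurable]: "ssum r n \<in> borel_measurable (PiM {..<n} (\<lambda>_. Dexp lam))"
  unfolding ssum_def by (intro borel_measurable_sum) measurable

lemma meas_cntv'[measurable]: "cntv r n \<in> borel_measurable (PiM {..<Suc n} (\<lambda>_. Dexp lam))"
  unfolding cntv_def by (intro borel_measurable_sum) measurable

lemma meas_ssum'[measurable]: "ssum r n \<in> borel_measurable (PiM {..<Suc n} (\<lambda>_. Dexp lam))"
  unfolding ssum_def by (intro borel_measurable_sum) measurable

lemma cntv_nonneg: "0 \<le> cntv r n x"
  unfolding cntv_def by (intro sum_nonneg) auto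

lemma cntv_upd: "cntv r (Suc n) (x(n := y)) = cntv r n x + (if r < y then 1 else 0)"
  unfolding cntv_def by (simp add: sum.lessThan_Suc)

lemma ssum_upd: "ssum r (Suc n) (x(n := y)) = ssum r n x + min y r"
  unfolding ssum_def by (simp add: sum.lessThan_Suc)

lemma cntv_upd0: "cntv r n (x(n := y)) = cntv r n x"
  unfolding cntv_def by (intro sum.cong) auto

lemma ssum_upd0: "ssum r n (x(n := y)) = ssum r n x"
  unfolding ssum_def by (intro sum.cong) auto

lemma emeasure_Dexp_gt:
  assumes "0 < lam" "0 \<le> a"
  shows "emeasure (Dexp lam) {a<..} = ennreal (exp (- a * lam))"
proof -
  interpret prob_space "Dexp lam" using prob_space_Dexp[OF assms(1)] .
  have dist: "distributed (Dexp lam) lborel (\<lambda>x. x) (\<lambda>x. ennreal (exponential_density lam x))"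
    unfolding distributed_def
  proof (intro conjI)
    show "distr (Dexp lam) lborel (\<lambda>x. x) = density lborel (\<lambda>x. ennreal (exponential_density lam x))"
      unfolding Dexp_def by (subst distr_id2) auto
  qed (auto simp: Dexp_def)
  have "prob {x \<in> space (Dexp lam). a < x} = exp (- a * lam)"
    by (rule exponential_distributedD_gt[OF dist assms(2,1)])
  moreover have "{x \<in> space (Dexp lam). a < x} = {a<..}" by auto
  ultimately show ?thesis by (simp add: emeasure_eq_measure)
qed



definition FF :: "real \<Rightarrow> real \<Rightarrow> nat \<Rightarrow> nat \<Rightarrow> real \<Rightarrow> ennreal" where
  "FF lam r n k v = (\<integral>\<^sup>+x. (if cntv r n x = real k \<and> ssum r n x \<le> v then ennreal (exp (lam * ssum r n x)) else 0) \<partial>PP lam n)"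

lemma prob_space_PP: "0 < lam \<Longrightarrow> prob_space (PP lam n)"
  unfolding PP_def by (intro prob_space_PiM prob_space_Dexp)

lemma FF_rec:
  assumes lam: "0 < lam" and r: "0 < r"
  shows "FF lam r (Suc n) k v = (if k = 0 then 0 else FF lam r n (k - 1) (v - r))
          + ennreal lam * (\<integral>\<^sup>+y. indicator {0..r} y * FF lam r n k (v - y) \<partial>lborel)"
proof -
  interpret PS: product_sigma_finite "\<lambda>_::nat. Dexp lam"
    by (simp add: product_sigma_finite_def prob_space_imp_sigma_finite[OF prob_space_Dexp[OF lam]])
  interpret PSF: pair_sigma_finite "PP lam n" lborel
    by (simp add: pair_sigma_finite_def prob_space_imp_sigma_finite[OF prob_space_PP[OF lam]] lborel.sigma_finite_measure_axioms)
  define g where "g = (\<lambda>x. if cntv r (Suc n) x = real k \<and> ssum r (Suc n) x \<le> v then ennreal (exp (lam * ssum r (Suc n) x)) else 0)"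
  define A where "A = (\<lambda>x. if k \<noteq> 0 \<and> cntv r n x = real (k - 1) \<and> ssum r n x \<le> v - r then ennreal (exp (lam * ssum r n x)) else 0)"
  define h where "h = (\<lambda>x w. if cntv r n x = real k \<and> ssum r n x \<le> w then ennreal (exp (lam * ssum r n x)) else 0)"
  have gm: "g \<in> borel_measurable (PiM (insert n {..<n}) (\<lambda>_. Dexp lam))"
    unfolding g_def lessThan_Suc[symmetric] by measurable
  have "FF lam r (Suc n) k v = (\<integral>\<^sup>+x. (\<integral>\<^sup>+y. g (x(n := y)) \<partial>Dexp lam) \<partial>PP lam n)"
    unfolding FF_def PP_def lessThan_Suc g_def[symmetric]
    by (rule PS.product_nn_integral_insert[OF _ _ gm]) auto
  also have "\<dots> = (\<integral>\<^sup>+x. A x + ennreal lam * (\<integral>\<^sup>+y. indicator {0..r} y * h x (v - y) \<partial>lborel) \<partial>PP lam n)"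
  proof (rule nn_integral_cong)
    fix x
    define c1 where "c1 = (if cntv r n x + 1 = real k \<and> ssum r n x + r \<le> v then ennreal (exp (lam * (ssum r n x + r))) else 0)"
    define h' where "h' = (\<lambda>y. if cntv r n x = real k \<and> ssum r n x + y \<le> v then ennreal (exp (lam * (ssum r n x + y))) else 0)"
    have pw: "g (x(n := y)) = c1 * indicator {r<..} y + indicator {..r} y * h' y" for y
      unfolding g_def c1_def h'_def cntv_upd ssum_upd
      by (cases "r < y") (auto simp: min_def indicator_def)
    have hm: "h' \<in> borel_measurable borel" unfolding h'_def by measurable
    have "(\<integral>\<^sup>+y. g (x(n := y)) \<partial>Dexp lam) = (\<integral>\<^sup>+y. c1 * indicator {r<..} y \<partial>Dexp lam) + (\<integral>\<^sup>+y. indicator {..r} y * h' y \<partial>Dexp lam)"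
      unfolding pw using hm by (intro nn_integral_add) auto
    also have "(\<integral>\<^sup>+y. c1 * indicator {r<..} y \<partial>Dexp lam) = c1 * ennreal (exp (- r * lam))"
      using emeasure_Dexp_gt[OF lam, of r] r by (subst nn_integral_cmult_indicator) auto
    also have "c1 * ennreal (exp (- r * lam)) = A x"
    proof -
      have "cntv r n x + 1 = real k \<longleftrightarrow> k \<noteq> 0 \<and> cntv r n x = real (k - 1)"
        using cntv_nonneg[of r n x] by (cases k) auto
      then show ?thesis
        unfolding c1_def A_def
        by (auto simp: ennreal_mult'[symmetric] mult_exp_exp algebra_simps)
    qed
    also have "(\<integral>\<^sup>+y. indicator {..r} y * h' y \<partial>Dexp lam)
        = (\<integral>\<^sup>+y. ennreal (exponential_density lam y) * (indicator {..r} y * h' y) \<partial>lborel)"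
      unfolding Dexp_def using hm by (subst nn_integral_density) auto
    also have "\<dots> = (\<integral>\<^sup>+y. ennreal lam * (indicator {0..r} y * h x (v - y)) \<partial>lborel)"
    proof (rule nn_integral_cong)
      fix y :: real
      show "ennreal (exponential_density lam y) * (indicator {..r} y * h' y) = ennreal lam * (indicator {0..r} y * h x (v - y))"
      proof (cases "0 \<le> y \<and> y \<le> r")
        case True
        have e0: "exp (- y * lam) * exp (lam * (ssum r n x + y)) = exp (lam * ssum r n x)"
          by (simp add: mult_exp_exp algebra_simps)
        have "lam * exp (- y * lam) * exp (lam * (ssum r n x + y)) = lam * exp (lam * ssum r n x)"
          using e0 by (simp add: mult.assoc)
        then show ?thesis using True lam
          unfolding h'_def h_def exponential_density_def
          by (auto simp: ennreal_mult'[symmetric] indicator_def)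
      next
        case False
        then show ?thesis unfolding exponential_density_def by (auto simp: indicator_def)
      qed
    qed
    also have "\<dots> = ennreal lam * (\<integral>\<^sup>+y. indicator {0..r} y * h x (v - y) \<partial>lborel)"
      unfolding h_def by (subst nn_integral_cmult) auto
    finally show "(\<integral>\<^sup>+y. g (x(n := y)) \<partial>Dexp lam) = A x + ennreal lam * (\<integral>\<^sup>+y. indicator {0..r} y * h x (v - y) \<partial>lborel)" .
  qed
  also have "\<dots> = (\<integral>\<^sup>+x. A x \<partial>PP lam n) + ennreal lam * (\<integral>\<^sup>+x. (\<integral>\<^sup>+y. indicator {0..r} y * h x (v - y) \<partial>lborel) \<partial>PP lam n)"
    unfolding A_def h_def PP_def
    by (subst nn_integral_add) (auto simp: nn_integral_cmult)
  also have "(\<integral>\<^sup>+x. A x \<partial>PP lam n) = (if k = 0 then 0 else FF lam r n (k - 1) (v - r))"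
    unfolding A_def FF_def by auto
  also have "(\<integral>\<^sup>+x. (\<integral>\<^sup>+y. indicator {0..r} y * h x (v - y) \<partial>lborel) \<partial>PP lam n)
      = (\<integral>\<^sup>+y. (\<integral>\<^sup>+x. indicator {0..r} y * h x (v - y) \<partial>PP lam n) \<partial>lborel)"
    by (rule PSF.Fubini'[symmetric]) (unfold h_def PP_def, measurable)
  also have "\<dots> = (\<integral>\<^sup>+y. indicator {0..r} y * FF lam r n k (v - y) \<partial>lborel)"
    unfolding h_def FF_def PP_def by (intro nn_integral_cong, subst nn_integral_cmult) auto
  finally show ?thesis .
qed



definition Cf :: "real \<Rightarrow> real \<Rightarrow> nat \<Rightarrow> nat \<Rightarrow> real \<Rightarrow> real" where
  "Cf lam r n k v = real (n choose k) * lam ^ (n - k) * Phi r (n - k) (v - real k * r)"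

lemma Cf_nonneg: "0 < lam \<Longrightarrow> 0 < r \<Longrightarrow> 0 \<le> Cf lam r n k v"
  unfolding Cf_def using Phi_nonneg[of r] by simp

lemma Cf_integral:
  assumes lam: "0 < lam" and r: "0 < r"
  shows "(\<integral>\<^sup>+y. indicator {0..r} y * ennreal (Cf lam r n k (v - y)) \<partial>lborel)
       = ennreal (real (n choose k) * lam ^ (n - k) * Phi r (Suc (n - k)) (v - real k * r))"
proof -
  have hi: "((\<lambda>y. Cf lam r n k (v - y)) has_integral
      (real (n choose k) * lam ^ (n - k) * Phi r (Suc (n - k)) (v - real k * r))) {0..r}"
    unfolding Cf_def
    using has_integral_mult_right[OF Phi_integral[of r "n - k" "v - real k * r"], of "real (n choose k) * lam ^ (n - k)"] r
    by (simp add: algebra_simps)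
  have "(\<integral>\<^sup>+y. indicator {0..r} y * ennreal (Cf lam r n k (v - y)) \<partial>lborel)
      = (\<integral>\<^sup>+y. ennreal (Cf lam r n k (v - y)) * indicator {0..r} y \<partial>lborel)"
    by (simp add: mult.commute)
  also have "\<dots> = ennreal (real (n choose k) * lam ^ (n - k) * Phi r (Suc (n - k)) (v - real k * r))"
    by (rule nn_integral_has_integral_lebesgue'[OF _ hi]) (use Cf_nonneg[OF lam r] in auto)
  finally show ?thesis .
qed

lemma Cf_rec:
  assumes lam: "0 < lam" and r: "0 < r"
  shows "(if k = 0 then 0 else Cf lam r n (k - 1) (v - r))
      + lam * (real (n choose k) * lam ^ (n - k) * Phi r (Suc (n - k)) (v - real k * r))
      = Cf lam r (Suc n) k v"
proof (cases k)
  case 0 then show ?thesis by (simp add: Cf_def)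
next
  case (Suc k')
  show ?thesis
  proof (cases "k' < n")
    case True
    then have e1: "Suc (n - Suc k') = n - k'" by auto
    have e2: "v - r - real k' * r = v - (1 + real k') * r" by (simp add: algebra_simps)
    have e3: "lam ^ (n - k') = lam * lam ^ (n - Suc k')"
      by (metis e1 power_Suc)
    show ?thesis unfolding Suc
      by (simp add: Cf_def e1 e2 e3 algebra_simps)
  next
    case False
    have e2: "v - r - real k' * r = v - (1 + real k') * r" by (simp add: algebra_simps)
    have z: "n choose Suc k' = 0" using False by simp
    show ?thesis unfolding Suc by (simp add: Cf_def e2 z)
  qed
qed

lemma FF_closed:
  assumes lam: "0 < lam" and r: "0 < r"
  shows "FF lam r n k v = ennreal (Cf lam r n k v)"
proof (induction n arbitrary: k v)
  case 0
  have "FF lam r 0 k v = (if 0 = real k \<and> 0 \<le> v then 1 else 0)"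
    unfolding FF_def PP_def cntv_def ssum_def by (simp add: PiM_empty nn_integral_count_space_finite)
  then show ?case by (cases k) (auto simp: Cf_def Phi_def psi_def)
next
  case (Suc n)
  have "FF lam r (Suc n) k v = (if k = 0 then 0 else ennreal (Cf lam r n (k - 1) (v - r)))
          + ennreal lam * ennreal (real (n choose k) * lam ^ (n - k) * Phi r (Suc (n - k)) (v - real k * r))"
    unfolding FF_rec[OF lam r] Suc.IH Cf_integral[OF lam r] by simp
  also have "\<dots> = ennreal ((if k = 0 then 0 else Cf lam r n (k - 1) (v - r))
      + lam * (real (n choose k) * lam ^ (n - k) * Phi r (Suc (n - k)) (v - real k * r)))"
    using Cf_nonneg[OF lam r] Phi_nonneg[of r] lam r
    by (auto simp: ennreal_plus[symmetric] ennreal_mult[symmetric] simp del: ennreal_plus)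
  also have "\<dots> = ennreal (Cf lam r (Suc n) k v)" by (simp only: Cf_rec[OF lam r])
  finally show ?case .
qed



lemma ennreal_diff_from_add:
  assumes "a + ennreal b = ennreal c" "0 \<le> b"
  shows "a = ennreal (c - b)"
proof -
  have "a = a + ennreal b - ennreal b" by (simp add: ennreal_add_diff_cancel_right)
  also have "\<dots> = ennreal c - ennreal b" using assms(1) by simp
  also have "\<dots> = ennreal (c - b)" using assms(2) by (simp add: ennreal_minus)
  finally show ?thesis .
qed

lemma Q_prob:
  assumes lam: "0 < lam" and r: "0 < r" and t: "0 \<le> t"
  shows "emeasure (PP lam (Suc n)) {x \<in> space (PP lam (Suc n)). cntv r n x = real k \<and> ssum r n x \<le> t \<and> t < ssum r (Suc n) x}
    = ennreal (exp (- lam * t) * (Cf lam r n k t - Cf lam r n k (t - r)))"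
proof -
  interpret PS: product_sigma_finite "\<lambda>_::nat. Dexp lam"
    by (simp add: product_sigma_finite_def prob_space_imp_sigma_finite[OF prob_space_Dexp[OF lam]])
  define Q where "Q = {x \<in> space (PP lam (Suc n)). cntv r n x = real k \<and> ssum r n x \<le> t \<and> t < ssum r (Suc n) x}"
  define g where "g = (\<lambda>x. if cntv r n x = real k \<and> ssum r n x \<le> t \<and> t < ssum r (Suc n) x then 1 else (0::ennreal))"
  have gm: "g \<in> borel_measurable (PiM (insert n {..<n}) (\<lambda>_. Dexp lam))"
    unfolding g_def lessThan_Suc[symmetric] by measurable
  have Qm: "Q \<in> sets (PP lam (Suc n))" unfolding Q_def PP_def by measurable
  define J where "J = (\<integral>\<^sup>+x. (if cntv r n x = real k \<and> t - r < ssum r n x \<and> ssum r n x \<le> t then ennreal (exp (lam * ssum r n x)) else 0) \<partial>PP lam n)"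
  have "emeasure (PP lam (Suc n)) Q = (\<integral>\<^sup>+x. indicator Q x \<partial>PP lam (Suc n))"
    using Qm by simp
  also have "\<dots> = (\<integral>\<^sup>+x. g x \<partial>PP lam (Suc n))"
    by (rule nn_integral_cong) (auto simp: Q_def g_def indicator_def)
  also have "\<dots> = (\<integral>\<^sup>+x. (\<integral>\<^sup>+y. g (x(n := y)) \<partial>Dexp lam) \<partial>PP lam n)"
    unfolding PP_def lessThan_Suc
    by (rule PS.product_nn_integral_insert[OF _ _ gm]) auto
  also have "\<dots> = (\<integral>\<^sup>+x. ennreal (exp (- lam * t)) * (if cntv r n x = real k \<and> t - r < ssum r n x \<and> ssum r n x \<le> t then ennreal (exp (lam * ssum r n x)) else 0) \<partial>PP lam n)"
  proof (rule nn_integral_cong)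
    fix x
    show "(\<integral>\<^sup>+y. g (x(n := y)) \<partial>Dexp lam) = ennreal (exp (- lam * t)) * (if cntv r n x = real k \<and> t - r < ssum r n x \<and> ssum r n x \<le> t then ennreal (exp (lam * ssum r n x)) else 0)"
    proof (cases "cntv r n x = real k \<and> ssum r n x \<le> t")
      case False
      then show ?thesis unfolding g_def cntv_upd0 ssum_upd0 by auto
    next
      case True
      define w where "w = t - ssum r n x"
      have w0: "0 \<le> w" using True by (simp add: w_def)
      have "(\<integral>\<^sup>+y. g (x(n := y)) \<partial>Dexp lam) = (\<integral>\<^sup>+y. indicator {y. w < min y r} y \<partial>Dexp lam)"
        unfolding g_def cntv_upd0 ssum_upd0 ssum_upd using True
        by (intro nn_integral_cong) (auto simp: w_def indicator_def)
      also have "\<dots> = emeasure (Dexp lam) {y. w < min y r}" by simp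
      also have "\<dots> = (if w < r then ennreal (exp (- w * lam)) else 0)"
      proof (cases "w < r")
        case True
        then have "{y. w < min y r} = {w<..}" by auto
        then show ?thesis using True emeasure_Dexp_gt[OF lam w0] by simp
      next
        case False
        then have "{y. w < min y r} = {}" by auto
        then show ?thesis using False by simp
      qed
      also have "\<dots> = ennreal (exp (- lam * t)) * (if cntv r n x = real k \<and> t - r < ssum r n x \<and> ssum r n x \<le> t then ennreal (exp (lam * ssum r n x)) else 0)"
        using True by (auto simp: w_def ennreal_mult'[symmetric] mult_exp_exp algebra_simps)
      finally show ?thesis .
    qed
  qed
  also have "\<dots> = ennreal (exp (- lam * t)) * J"
    unfolding J_def PP_def by (subst nn_integral_cmult) auto
  also have "J = ennreal (Cf lam r n k t - Cf lam r n k (t - r))"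
  proof (rule ennreal_diff_from_add)
    show "0 \<le> Cf lam r n k (t - r)" by (rule Cf_nonneg[OF lam r])
    have "J + FF lam r n k (t - r) = FF lam r n k t"
      unfolding J_def FF_def PP_def
      using r by (subst nn_integral_add[symmetric]) (auto intro!: nn_integral_cong)
    then show "J + ennreal (Cf lam r n k (t - r)) = ennreal (Cf lam r n k t)"
      by (simp add: FF_closed[OF lam r])
  qed
  finally show ?thesis unfolding Q_def
    by (simp add: ennreal_mult'[symmetric])
qed

lemma chernoff_PP:
  assumes lam: "0 < lam" and r: "0 < r"
  defines "c \<equiv> (1 - exp (- r)) * exp (- r * lam)"
  shows "0 < c" "c < 1"
    and "emeasure (PP lam m) {x \<in> space (PP lam m). ssum r m x \<le> t} \<le> ennreal (exp t * (1 - c) ^ m)"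
proof -
  interpret PS: product_sigma_finite "\<lambda>_::nat. Dexp lam"
    by (simp add: product_sigma_finite_def prob_space_imp_sigma_finite[OF prob_space_Dexp[OF lam]])
  interpret D: prob_space "Dexp lam" by (rule prob_space_Dexp[OF lam])
  have e1: "exp (- r) < 1" using r by simp
  have e2: "0 < exp (- r * lam)" "exp (- r * lam) < 1" using r lam by auto
  show "0 < c" unfolding c_def using e1 e2 by simp
  have "c < 1 * 1" unfolding c_def using e1 e2
    by (intro mult_strict_mono) auto
  then show "c < 1" by simp
  define q where "q = (\<integral>\<^sup>+y. ennreal (exp (- min y r)) \<partial>Dexp lam)"
  have "q = (\<integral>\<^sup>+y. ennreal (exponential_density lam y) * ennreal (exp (- min y r)) \<partial>lborel)"
    unfolding q_def Dexp_def by (subst nn_integral_density) auto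
  also have "\<dots> \<le> (\<integral>\<^sup>+y. ennreal (exponential_density lam y) * (indicator {..r} y + ennreal (exp (- r)) * indicator {r<..} y) \<partial>lborel)"
  proof (rule nn_integral_mono)
    fix y :: real
    show "ennreal (exponential_density lam y) * ennreal (exp (- min y r))
      \<le> ennreal (exponential_density lam y) * (indicator {..r} y + ennreal (exp (- r)) * indicator {r<..} y)"
    proof (cases "y < 0")
      case True then show ?thesis by (simp add: exponential_density_def)
    next
      case False
      show ?thesis
      proof (intro mult_left_mono)
        show "ennreal (exp (- min y r)) \<le> indicator {..r} y + ennreal (exp (- r)) * indicator {r<..} y"
          using False by (cases "y \<le> r") (auto simp: indicator_def)
      qed simp
    qed
  qed
  also have "\<dots> = (\<integral>\<^sup>+y. (indicator {..r} y + ennreal (exp (- r)) * indicator {r<..} y) \<partial>Dexp lam)"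
    unfolding Dexp_def by (subst nn_integral_density) auto
  also have "\<dots> = emeasure (Dexp lam) {..r} + ennreal (exp (- r)) * emeasure (Dexp lam) {r<..}"
    by (subst nn_integral_add) (auto simp: nn_integral_cmult_indicator)
  also have "\<dots> = ennreal (1 - c)"
  proof -
    have m1: "measure (Dexp lam) {r<..} = exp (- r * lam)"
      using emeasure_Dexp_gt[OF lam, of r] r by (simp add: D.emeasure_eq_measure)
    have "measure (Dexp lam) (space (Dexp lam) - {r<..}) = 1 - exp (- r * lam)"
      using D.prob_compl[of "{r<..}"] m1 by simp
    moreover have "space (Dexp lam) - {r<..} = {..r}" by auto
    ultimately have m2: "measure (Dexp lam) {..r} = 1 - exp (- r * lam)" by simp
    show ?thesis
      unfolding D.emeasure_eq_measure m1 m2 c_def using e2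
      by (simp add: ennreal_mult'[symmetric] ennreal_plus[symmetric] algebra_simps del: ennreal_plus)
  qed
  finally have q: "q \<le> ennreal (1 - c)" .
  have "emeasure (PP lam m) {x \<in> space (PP lam m). ssum r m x \<le> t}
      = (\<integral>\<^sup>+x. indicator {x \<in> space (PP lam m). ssum r m x \<le> t} x \<partial>PP lam m)"
    unfolding PP_def by (subst nn_integral_indicator) (auto, measurable)
  also have "\<dots> \<le> (\<integral>\<^sup>+x. ennreal (exp t) * (\<Prod>i<m. ennreal (exp (- min (x i) r))) \<partial>PP lam m)"
  proof (rule nn_integral_mono)
    fix x
    have "(\<Prod>i<m. ennreal (exp (- min (x i) r))) = ennreal (exp (- ssum r m x))"
      unfolding ssum_def by (simp add: prod_ennreal exp_sum[symmetric] sum_negf)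
    then have "ennreal (exp t) * (\<Prod>i<m. ennreal (exp (- min (x i) r))) = ennreal (exp (t - ssum r m x))"
      by (simp add: ennreal_mult'[symmetric] exp_diff exp_minus field_simps)
    then show "indicator {x \<in> space (PP lam m). ssum r m x \<le> t} x \<le> ennreal (exp t) * (\<Prod>i<m. ennreal (exp (- min (x i) r)))"
      by (auto simp: indicator_def)
  qed
  also have "\<dots> = ennreal (exp t) * (\<Prod>i<m. q)"
    unfolding PP_def q_def
    by (subst nn_integral_cmult, measurable, subst PS.product_nn_integral_prod) auto
  also have "\<dots> \<le> ennreal (exp t) * ennreal ((1 - c) ^ m)"
  proof -
    have "q ^ m \<le> ennreal (1 - c) ^ m" by (rule power_mono[OF q]) simp
    also have "\<dots> = ennreal ((1 - c) ^ m)" using \<open>c < 1\<close> by (simp add: ennreal_power)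
    finally show ?thesis by (intro mult_left_mono) auto
  qed
  also have "\<dots> = ennreal (exp t * (1 - c) ^ m)" by (simp add: ennreal_mult')
  finally show "emeasure (PP lam m) {x \<in> space (PP lam m). ssum r m x \<le> t} \<le> ennreal (exp t * (1 - c) ^ m)" .
qed



lemma Cf_mono:
  assumes lam: "0 < lam" and r: "0 < r" and "v \<le> w"
  shows "Cf lam r n k v \<le> Cf lam r n k w"
proof -
  have "FF lam r n k v \<le> FF lam r n k w"
    unfolding FF_def using assms(3) by (intro nn_integral_mono) auto
  then show ?thesis using Cf_nonneg[OF lam r] by (simp add: FF_closed[OF lam r])
qed

lemma Phi_diff:
  "Phi r l (u) - Phi r l (u - r) = (\<Sum>i\<le>Suc l. (-1)^i * real (Suc l choose i) * psi l (u - real i * r))"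
proof -
  have "(\<Sum>i\<le>Suc l. (-1)^i * real (Suc l choose i) * psi l (u - real i * r))
     = (\<Sum>i\<le>l. (-1)^i * real (l choose i) * (psi l (u - real i * r) - psi l (u - real (Suc i) * r)))"
    by (rule alt_sum)
  also have "\<dots> = (\<Sum>i\<le>l. (-1)^i * real (l choose i) * psi l (u - real i * r))
           - (\<Sum>i\<le>l. (-1)^i * real (l choose i) * psi l (u - r - real i * r))"
    by (simp add: right_diff_distrib sum_subtractf algebra_simps)
  finally show ?thesis unfolding Phi_def by simp
qed

lemma final_sum:
  assumes r: "0 < r" and j1: "real j * r \<le> t" and j2: "t < (real j + 1) * r" and kj: "k \<le> j"
  shows "lam ^ l * (Phi r l (t - real k * r) - Phi r l (t - r - real k * r))
    = (\<Sum>i = 0..j - k. (-1) ^ i * real ((l + 1) choose i) * (lam * (t - real (i + k) * r)) ^ l / fact l)"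
proof -
  define G where "G i = (-1)^i * real (Suc l choose i) * (lam ^ l * psi l (t - real (i + k) * r))" for i
  have "lam ^ l * (Phi r l (t - real k * r) - Phi r l (t - r - real k * r))
      = lam ^ l * (Phi r l (t - real k * r) - Phi r l (t - real k * r - r))"
    by (simp add: algebra_simps)
  also have "\<dots> = (\<Sum>i\<le>Suc l. G i)"
    unfolding Phi_diff G_def by (simp add: sum_distrib_left algebra_simps)
  also have "\<dots> = (\<Sum>i\<in>{..Suc l + (j - k)}. G i)"
    by (rule sum.mono_neutral_left) (auto simp: G_def)
  also have "\<dots> = (\<Sum>i\<in>{0..j - k}. G i)"
  proof (rule sum.mono_neutral_right)
    show "\<forall>i\<in>{..Suc l + (j - k)} - {0..j - k}. G i = 0"
    proof
      fix i assume i: "i \<in> {..Suc l + (j - k)} - {0..j - k}"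
      then have "real j + 1 \<le> real (i + k)" using kj by auto
      then have "(real j + 1) * r \<le> real (i + k) * r" using r by (intro mult_right_mono) auto
      then have "t - real (i + k) * r < 0" using j2 by linarith
      then show "G i = 0" by (simp add: G_def psi_def)
    qed
  qed auto
  also have "\<dots> = (\<Sum>i = 0..j - k. (-1) ^ i * real ((l + 1) choose i) * (lam * (t - real (i + k) * r)) ^ l / fact l)"
  proof (rule sum.cong)
    fix i assume i: "i \<in> {0..j - k}"
    then have "real (i + k) \<le> real j" using kj by auto
    then have "real (i + k) * r \<le> real j * r" using r by (intro mult_right_mono) auto
    then have "0 \<le> t - real (i + k) * r" using j1 by linarith
    then show "G i = (-1) ^ i * real ((l + 1) choose i) * (lam * (t - real (i + k) * r)) ^ l / fact l"
      by (simp add: G_def psi_def power_mult_distrib)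
  qed simp
  finally show ?thesis .
qed



lemma transfer_PP:
  assumes M: "prob_space M" and ind: "prob_space.indep_vars M (\<lambda>_. borel) X UNIV"
    and dist: "\<And>i. distributed M lborel (X i) (exponential_density lam)"
    and S: "S \<in> sets (PP lam (Suc m))"
  shows "emeasure M {\<omega> \<in> space M. (\<lambda>i\<in>{..<Suc m}. X i \<omega>) \<in> S} = emeasure (PP lam (Suc m)) S"
proof -
  interpret prob_space M by fact
  have rv: "\<And>i. X i \<in> borel_measurable M" using distributed_measurable[OF dist] by simp
  have ind': "indep_vars (\<lambda>_. borel) X {..<Suc m}" using indep_vars_subset[OF ind] by auto
  have eq: "distr M (\<Pi>\<^sub>M i\<in>{..<Suc m}. borel) (\<lambda>x. \<lambda>i\<in>{..<Suc m}. X i x) = (\<Pi>\<^sub>M i\<in>{..<Suc m}. distr M borel (X i))"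
    using indep_vars_iff_distr_eq_PiM[where I="{..<Suc m}" and M'="\<lambda>_. borel" and X=X] rv ind' by auto
  have di: "distr M borel (X i) = Dexp lam" for i
  proof -
    have "distr M borel (X i) = distr M lborel (X i)" by (rule distr_cong) auto
    also have "\<dots> = Dexp lam" unfolding Dexp_def by (rule distributed_distr_eq_density[OF dist])
    finally show ?thesis .
  qed
  have eq2: "distr M (\<Pi>\<^sub>M i\<in>{..<Suc m}. borel) (\<lambda>x. \<lambda>i\<in>{..<Suc m}. X i x) = PP lam (Suc m)"
    unfolding eq di PP_def by simp
  have vm: "(\<lambda>x. \<lambda>i\<in>{..<Suc m}. X i x) \<in> measurable M (\<Pi>\<^sub>M i\<in>{..<Suc m}. borel)"
    using rv by measurable
  have S': "S \<in> sets (\<Pi>\<^sub>M i\<in>{..<Suc m}. (borel :: real measure))"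
    using S unfolding PP_def by (simp add: sets_PiM_cong[OF refl sets_Dexp])
  have "emeasure (PP lam (Suc m)) S = emeasure M ((\<lambda>x. \<lambda>i\<in>{..<Suc m}. X i x) -` S \<inter> space M)"
    unfolding eq2[symmetric] by (rule emeasure_distr[OF vm S'])
  also have "(\<lambda>x. \<lambda>i\<in>{..<Suc m}. X i x) -` S \<inter> space M = {\<omega> \<in> space M. (\<lambda>i\<in>{..<Suc m}. X i \<omega>) \<in> S}"
    by auto
  finally show ?thesis ..
qed

lemma RaFT_N_iff:
  assumes t: "0 \<le> t"
  shows "RaFT_N X r t \<omega> = n \<longleftrightarrow>
    (((\<Sum>i<n. min (X i \<omega>) r) \<le> t \<and> (\<forall>m. (\<Sum>i<m. min (X i \<omega>) r) \<le> t \<longrightarrow> m \<le> n))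
     \<or> (n = 0 \<and> (\<forall>m0. \<exists>m. (\<Sum>i<m. min (X i \<omega>) r) \<le> t \<and> m0 \<le> m)))"
proof -
  define S where "S = {n. (\<Sum>k<n. min (X k \<omega>) r) \<le> t}"
  have S0: "0 \<in> S" using t by (simp add: S_def)
  show ?thesis
  proof (cases "finite S")
    case True
    then obtain B where B: "\<forall>m\<in>S. m \<le> B" using finite_nat_set_iff_bounded_le by blast
    have "RaFT_N X r t \<omega> = Max S" unfolding RaFT_N_def S_def[symmetric] using True by simp
    moreover have "Max S = n \<longleftrightarrow> n \<in> S \<and> (\<forall>m\<in>S. m \<le> n)"
      using True S0 by (subst Max_eq_iff) auto
    moreover have "\<not> (\<forall>m0. \<exists>m. (\<Sum>i<m. min (X i \<omega>) r) \<le> t \<and> m0 \<le> m)"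
      using B unfolding S_def by (metis Suc_n_not_le_n le_trans mem_Collect_eq)
    ultimately show ?thesis unfolding S_def by auto
  next
    case False
    have "RaFT_N X r t \<omega> = 0" unfolding RaFT_N_def S_def[symmetric] using False by simp
    moreover have "\<not> (\<forall>m\<in>S. m \<le> n)" for n
      using False finite_nat_set_iff_bounded_le by blast
    moreover have "\<forall>m0. \<exists>m\<in>S. m0 \<le> m"
      using False by (metis finite_nat_set_iff_bounded_le le_cases le_trans)
    ultimately show ?thesis unfolding S_def by auto
  qed
qed

lemma card_sum_real:
  "real (card {i. i < (n::nat) \<and> P i}) = (\<Sum>i<n. if P i then 1 else 0)"
proof (induction n)
  case 0 then show ?case by simp
next
  case (Suc n)
  have "{i. i < Suc n \<and> P i} = (if P n then insert n {i. i < n \<and> P i} else {i. i < n \<and> P i})"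
    by (auto simp: less_Suc_eq)
  then show ?case using Suc by (simp add: sum.lessThan_Suc)
qed



lemma ssum_restrict: "m \<le> N \<Longrightarrow> ssum r m (restrict f {..<N}) = ssum r m f"
  unfolding ssum_def by (intro sum.cong) auto

lemma cntv_restrict: "m \<le> N \<Longrightarrow> cntv r m (restrict f {..<N}) = cntv r m f"
  unfolding cntv_def by (intro sum.cong) auto

theorem mainTheorem3:
  fixes M :: "'a measure" and X :: "nat \<Rightarrow> 'a \<Rightarrow> real"
    and lam r t :: real and j k l :: nat
  assumes "prob_space M"
    and "prob_space.indep_vars M (\<lambda>_. borel) X UNIV"
    and "\<And>i. distributed M lborel (X i) (exponential_density lam)"
    and "lam > 0" and "r > 0"
    and "real j * r \<le> t" and "t < (real j + 1) * r"
    and "k \<le> j"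
  shows "measure M {\<omega> \<in> space M. RaFT_A X r t \<omega> = k \<and> RaFT_D X r t \<omega> = l}
    = exp (- lam * t) * real ((k + l) choose k) *
      (\<Sum>i = 0..j - k. (-1) ^ i * real ((l + 1) choose i) *
         (lam * (t - real (i + k) * r)) ^ l / fact l)"
proof -
  note Mp = assms(1) and ind = assms(2) and dist = assms(3) and lam = assms(4) and r = assms(5)
    and j1 = assms(6) and j2 = assms(7) and kj = assms(8)
  interpret prob_space M by fact
  have t0: "0 \<le> t" using j1 r by (metis mult_nonneg_nonneg of_nat_0_le_iff order_trans less_imp_le)
  define n where "n = k + l"
  define sX where "sX m \<omega> = (\<Sum>i<m. min (X i \<omega>) r)" for m \<omega>
  define cA where "cA m \<omega> = (\<Sum>i<m. if r < X i \<omega> then 1 else (0::real))" for m \<omega>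
  define cD where "cD m \<omega> = (\<Sum>i<m. if X i \<omega> \<le> r then 1 else (0::real))" for m \<omega>
  have cAD: "cA m \<omega> + cD m \<omega> = real m" for m \<omega>
  proof -
    have "\<And>i. (if r < X i \<omega> then 1 else 0) + (if X i \<omega> \<le> r then 1 else (0::real)) = 1" by auto
    then show ?thesis unfolding cA_def cD_def sum.distrib[symmetric] by simp
  qed
  have rv[measurable]: "\<And>i. X i \<in> borel_measurable M" using distributed_measurable[OF dist] by simp
  have smono: "sX a \<omega> \<le> sX b \<omega>" if "\<forall>i. 0 \<le> X i \<omega>" "a \<le> b" for a b \<omega>
    unfolding sX_def using that r by (intro sum_mono2) auto
  define E where "E = {\<omega> \<in> space M. RaFT_A X r t \<omega> = k \<and> RaFT_D X r t \<omega> = l}"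
  have E_eq: "E = {\<omega> \<in> space M. \<exists>m. ((sX m \<omega> \<le> t \<and> (\<forall>m'. sX m' \<omega> \<le> t \<longrightarrow> m' \<le> m))
       \<or> (m = 0 \<and> (\<forall>m0. \<exists>m'. sX m' \<omega> \<le> t \<and> m0 \<le> m'))) \<and> cA m \<omega> = real k \<and> cD m \<omega> = real l}"
  proof -
    have "RaFT_A X r t \<omega> = k \<and> RaFT_D X r t \<omega> = l \<longleftrightarrow>
      (\<exists>m. RaFT_N X r t \<omega> = m \<and> cA m \<omega> = real k \<and> cD m \<omega> = real l)" for \<omega>
      unfolding RaFT_A_def RaFT_D_def cA_def cD_def card_sum_real[symmetric]
      by auto
    then show ?thesis unfolding E_def RaFT_N_iff[OF t0] sX_def by auto
  qed
  have Em: "E \<in> sets M" unfolding E_eq sX_def cA_def cD_def by measurable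
  define Qs where "Qs = {x \<in> space (PP lam (Suc n)). cntv r n x = real k \<and> ssum r n x \<le> t \<and> t < ssum r (Suc n) x}"
  have Qsm: "Qs \<in> sets (PP lam (Suc n))" unfolding Qs_def PP_def by measurable
  define QO where "QO = {\<omega> \<in> space M. (\<lambda>i\<in>{..<Suc n}. X i \<omega>) \<in> Qs}"
  have QO_eq: "QO = {\<omega> \<in> space M. cA n \<omega> = real k \<and> sX n \<omega> \<le> t \<and> t < sX (Suc n) \<omega>}"
    unfolding QO_def Qs_def
    by (auto simp: ssum_restrict cntv_restrict PP_def space_PiM cntv_def ssum_def cA_def sX_def)
  have QOm: "QO \<in> sets M" unfolding QO_eq sX_def cA_def by measurable
  have emQ: "emeasure M QO = ennreal (exp (- lam * t) * (Cf lam r n k t - Cf lam r n k (t - r)))"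
  proof -
    have "emeasure M QO = emeasure (PP lam (Suc n)) Qs" unfolding QO_def by (rule transfer_PP[OF Mp ind dist Qsm])
    also have "\<dots> = ennreal (exp (- lam * t) * (Cf lam r n k t - Cf lam r n k (t - r)))"
      unfolding Qs_def by (rule Q_prob[OF lam r t0])
    finally show ?thesis .
  qed
  have nonneg: "AE \<omega> in M. \<forall>i. 0 \<le> X i \<omega>"
  proof (subst AE_all_countable, intro allI)
    fix i
    have "prob {\<omega> \<in> space M. X i \<omega> \<le> 0} = 1 - exp (- 0 * lam)"
      by (rule exponential_distributedD_le[OF dist _ lam]) simp
    then have "{\<omega> \<in> space M. X i \<omega> \<le> 0} \<in> null_sets M"
      by (auto simp: null_sets_def emeasure_eq_measure)
    then show "AE \<omega> in M. 0 \<le> X i \<omega>"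
      by (rule AE_I') auto
  qed
  define c where "c = (1 - exp (- r)) * exp (- r * lam)"
  have c1: "0 < c" "c < 1" unfolding c_def using chernoff_PP[OF lam r] by auto
  define B where "B = {\<omega> \<in> space M. \<forall>m. sX m \<omega> \<le> t}"
  have Bm: "B \<in> sets M" unfolding B_def sX_def by measurable
  have Bbound: "measure M B \<le> exp t * (1 - c) ^ Suc m" for m
  proof -
    define Ss where "Ss = {x \<in> space (PP lam (Suc m)). ssum r (Suc m) x \<le> t}"
    have Ssm: "Ss \<in> sets (PP lam (Suc m))" unfolding Ss_def PP_def by measurable
    have "emeasure M B \<le> emeasure M {\<omega> \<in> space M. (\<lambda>i\<in>{..<Suc m}. X i \<omega>) \<in> Ss}"
    proof (rule emeasure_mono)
      show "B \<subseteq> {\<omega> \<in> space M. (\<lambda>i\<in>{..<Suc m}. X i \<omega>) \<in> Ss}"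
        unfolding B_def Ss_def by (auto simp: ssum_restrict PP_def space_PiM ssum_def sX_def simp del: sum.lessThan_Suc)
      show "{\<omega> \<in> space M. (\<lambda>i\<in>{..<Suc m}. X i \<omega>) \<in> Ss} \<in> sets M"
        unfolding Ss_def PP_def by measurable
    qed
    also have "\<dots> = emeasure (PP lam (Suc m)) Ss" by (rule transfer_PP[OF Mp ind dist Ssm])
    also have "\<dots> \<le> ennreal (exp t * (1 - c) ^ Suc m)"
      unfolding Ss_def c_def by (rule chernoff_PP(3)[OF lam r])
    finally show ?thesis using c1 by (simp add: emeasure_eq_measure)
  qed
  have "(\<lambda>m. exp t * (1 - c) ^ Suc m) \<longlonglongrightarrow> exp t * 0"
    using c1 by (intro tendsto_mult tendsto_const LIMSEQ_Suc LIMSEQ_power_zero) auto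
  then have "measure M B \<le> exp t * 0" by (rule LIMSEQ_le_const) (use Bbound in auto)
  then have "measure M B = 0" using measure_nonneg[of M B] by simp
  then have Bnull: "B \<in> null_sets M" using Bm by (simp add: null_sets_def emeasure_eq_measure)
  have fin: "AE \<omega> in M. (\<forall>i. 0 \<le> X i \<omega>) \<longrightarrow> (\<exists>m0. \<forall>m. sX m \<omega> \<le> t \<longrightarrow> m < m0)"
  proof (rule AE_I'[OF Bnull])
    show "{\<omega> \<in> space M. \<not> ((\<forall>i. 0 \<le> X i \<omega>) \<longrightarrow> (\<exists>m0. \<forall>m. sX m \<omega> \<le> t \<longrightarrow> m < m0))} \<subseteq> B"
    proof (intro subsetI)
      fix \<omega> assume "\<omega> \<in> {\<omega> \<in> space M. \<not> ((\<forall>i. 0 \<le> X i \<omega>) \<longrightarrow> (\<exists>m0. \<forall>m. sX m \<omega> \<le> t \<longrightarrow> m < m0))}"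
      then have \<omega>: "\<omega> \<in> space M" "\<forall>i. 0 \<le> X i \<omega>" "\<not> (\<exists>m0. \<forall>m. sX m \<omega> \<le> t \<longrightarrow> m < m0)" by auto
      show "\<omega> \<in> B" unfolding B_def
      proof (intro CollectI conjI allI \<omega>(1))
        fix m
        obtain m' where "sX m' \<omega> \<le> t" "\<not> m' < m" using \<omega>(3) by blast
        then show "sX m \<omega> \<le> t" using smono[OF \<omega>(2), of m m'] by auto
      qed
    qed
  qed
  have AEeq: "AE \<omega> in M. \<omega> \<in> E \<longleftrightarrow> \<omega> \<in> QO"
    using nonneg fin
  proof eventually_elim
    case (elim \<omega>)
    then have nn: "\<forall>i. 0 \<le> X i \<omega>" and fi: "\<exists>m0. \<forall>m. sX m \<omega> \<le> t \<longrightarrow> m < m0" by auto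
    show ?case
    proof
      assume "\<omega> \<in> E"
      then obtain m where sp: "\<omega> \<in> space M" and
        disj: "(sX m \<omega> \<le> t \<and> (\<forall>m'. sX m' \<omega> \<le> t \<longrightarrow> m' \<le> m)) \<or> (m = 0 \<and> (\<forall>m0. \<exists>m'. sX m' \<omega> \<le> t \<and> m0 \<le> m'))"
        and ca: "cA m \<omega> = real k" and cd: "cD m \<omega> = real l"
        unfolding E_eq by blast
      have mn: "m = n" using cAD[of m \<omega>] ca cd unfolding n_def by simp
      have "sX m \<omega> \<le> t \<and> (\<forall>m'. sX m' \<omega> \<le> t \<longrightarrow> m' \<le> m)"
      proof -
        have "\<not> (\<forall>m0. \<exists>m'. sX m' \<omega> \<le> t \<and> m0 \<le> m')"
          using fi by (metis not_le)
        then show ?thesis using disj by blast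
      qed
      then have "sX n \<omega> \<le> t" "t < sX (Suc n) \<omega>" unfolding mn by (auto simp: not_le[symmetric])
      then show "\<omega> \<in> QO" unfolding QO_eq using sp ca mn by auto
    next
      assume "\<omega> \<in> QO"
      then have sp: "\<omega> \<in> space M" and ca: "cA n \<omega> = real k" and s1: "sX n \<omega> \<le> t" and s2: "t < sX (Suc n) \<omega>"
        unfolding QO_eq by auto
      have cd: "cD n \<omega> = real l" using cAD[of n \<omega>] ca unfolding n_def by simp
      have "\<forall>m'. sX m' \<omega> \<le> t \<longrightarrow> m' \<le> n"
      proof (intro allI impI)
        fix m' assume "sX m' \<omega> \<le> t"
        show "m' \<le> n"
        proof (rule ccontr)
          assume "\<not> m' \<le> n"
          then have "Suc n \<le> m'" by simp
          then have "sX (Suc n) \<omega> \<le> sX m' \<omega>" by (rule smono[OF nn])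
          then show False using s2 \<open>sX m' \<omega> \<le> t\<close> by simp
        qed
      qed
      then show "\<omega> \<in> E" unfolding E_eq using sp ca cd s1 by blast
    qed
  qed
  have "measure M E = measure M QO" by (rule measure_eq_AE[OF AEeq Em QOm])
  also have "\<dots> = exp (- lam * t) * (Cf lam r n k t - Cf lam r n k (t - r))"
  proof -
    have "0 \<le> Cf lam r n k t - Cf lam r n k (t - r)" using Cf_mono[OF lam r, of "t - r" t] r by simp
    then show ?thesis using emQ by (simp add: measure_def)
  qed
  also have "\<dots> = exp (- lam * t) * real ((k + l) choose k) *
      (lam ^ l * (Phi r l (t - real k * r) - Phi r l (t - r - real k * r)))"
    unfolding Cf_def n_def by (simp add: algebra_simps)
  also have "\<dots> = exp (- lam * t) * real ((k + l) choose k) *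
      (\<Sum>i = 0..j - k. (-1) ^ i * real ((l + 1) choose i) *
         (lam * (t - real (i + k) * r)) ^ l / fact l)"
    unfolding final_sum[OF r j1 j2 kj] ..
  finally show ?thesis unfolding E_def .
qed

end
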